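(* Let $(S,\to)$ be a labelled transition system, $\mathcal{C}$ a consistent colouring and $s\in S$. Then a sequence $\sigma$ is a complete $\mathcal{C}$-coloured trace of $s$ if and only if $\sigma$ is a $\mathcal{C}$-coloured trace of $s$ that is infinite, or is a divergent $\mathcal{C}$-coloured trace of $s$, or is maximal in the sense that it is not a proper prefix of any $\mathcal{C}$-coloured trace of $s$.
   Context: Fix a set $\mathrm{Act}$ of actions containing a special action $\tau$. An LTS is $(S,\to)$ with $\to\subseteq S\times\mathrm{Act}\times S$. A path from $s$ is an alternating sequence $s_0,a_1,s_1,a_2,\dots$ (ending with a state if finite) with $s_0=s$ and $s_{k-1}\xrightarrow{a_k}s_k$; it is maximal if infinite or if its last state has no outgoing transitions. A colouring is a function $\mathcal{C}$ from $S$ into an arbitrary set of colours. For a path $\pi$, $\mathcal{C}(\pi)$ is obtained from $\mathcal{C}(s_0),a_1,\mathcal{C}(s_1),a_2,\dots$ by contracting every finite maximal consecutive subsequence $C,\tau,C,\tau,\dots,\tau,C$ and every infinite one $C,\tau,C,\tau,\dots$ to $C$. For $\pi$ a path from $s$, $\mathcal{C}(\pi)$ is a $\mathcal{C}$-coloured trace of $s$; it is a complete $\mathcal{C}$-coloured trace of $s$ if $\pi$ is maximal, and a divergent $\mathcal{C}$-coloured trace of $s$ if $\pi$ is infinite and $\mathcal{C}(\pi)$ is finite. $\mathcal{C}$ is consistent if any two states of equal colour have the same $\mathcal{C}$-coloured traces. *)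

theory Defs
  imports Main
begin

(* A (possibly infinite) sequence x0, b1, b2, ... is represented by its head x0 together
   with a function  nat => 'b option  giving the remaining items; the sequence is finite
   iff some entry is None, and Nones form a suffix (wf_seq). *)

definition wf_seq :: "(nat \<Rightarrow> 'b option) \<Rightarrow> bool" where
  "wf_seq f \<longleftrightarrow> (\<forall>n. f n = None \<longrightarrow> f (Suc n) = None)"

definition finite_seq :: "(nat \<Rightarrow> 'b option) \<Rightarrow> bool" where
  "finite_seq f \<longleftrightarrow> (\<exists>n. f n = None)"

(* A path s0, a1, s1, a2, s2, ... is given by s0 and f with f n = Some (a_{n+1}, s_{n+1}). *)
fun state_at :: "'s \<Rightarrow> (nat \<Rightarrow> ('a \<times> 's) option) \<Rightarrow> nat \<Rightarrow> 's" where
  "state_at s0 f 0 = s0"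
| "state_at s0 f (Suc n) = snd (the (f n))"

definition is_path :: "('s \<times> 'a \<times> 's) set \<Rightarrow> 's \<Rightarrow> (nat \<Rightarrow> ('a \<times> 's) option) \<Rightarrow> bool" where
  "is_path T s0 f \<longleftrightarrow> wf_seq f \<and>
     (\<forall>n a t. f n = Some (a, t) \<longrightarrow> (state_at s0 f n, a, t) \<in> T)"

definition is_maximal_path :: "('s \<times> 'a \<times> 's) set \<Rightarrow> 's \<Rightarrow> (nat \<Rightarrow> ('a \<times> 's) option) \<Rightarrow> bool" where
  "is_maximal_path T s0 f \<longleftrightarrow> is_path T s0 f \<and>
     (\<not> finite_seq f \<or>
      (\<exists>n. f n = None \<and> (\<forall>m<n. f m \<noteq> None) \<and> (\<forall>a t. (state_at s0 f n, a, t) \<notin> T)))"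

definition kept :: "('s \<Rightarrow> 'c) \<Rightarrow> 'a \<Rightarrow> 's \<Rightarrow> (nat \<Rightarrow> ('a \<times> 's) option) \<Rightarrow> nat \<Rightarrow> bool" where
  "kept C tau s0 f n \<longleftrightarrow>
     (\<exists>a t. f n = Some (a, t) \<and> \<not> (a = tau \<and> C t = C (state_at s0 f n)))"

(* the coloured trace C(pi) of the path pi = (s0, f): contract every maximal block C,tau,C,...,tau,C
   (finite or infinite) to C, i.e. keep exactly the kept steps, in order *)
definition ctrace :: "('s \<Rightarrow> 'c) \<Rightarrow> 'a \<Rightarrow> 's \<Rightarrow> (nat \<Rightarrow> ('a \<times> 's) option)
    \<Rightarrow> 'c \<times> (nat \<Rightarrow> ('a \<times> 'c) option)" where
  "ctrace C tau s0 f =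
     (C s0, (\<lambda>k. if (\<exists>n. kept C tau s0 f n \<and> card {m. m < n \<and> kept C tau s0 f m} = k)
                 then map_option (\<lambda>(a, t). (a, C t))
                        (f (THE n. kept C tau s0 f n \<and> card {m. m < n \<and> kept C tau s0 f m} = k))
                 else None))"

definition coloured_traces :: "('s \<times> 'a \<times> 's) set \<Rightarrow> ('s \<Rightarrow> 'c) \<Rightarrow> 'a \<Rightarrow> 's
    \<Rightarrow> ('c \<times> (nat \<Rightarrow> ('a \<times> 'c) option)) set" where
  "coloured_traces T C tau s = {ctrace C tau s f | f. is_path T s f}"

definition complete_coloured_traces :: "('s \<times> 'a \<times> 's) set \<Rightarrow> ('s \<Rightarrow> 'c) \<Rightarrow> 'a \<Rightarrow> 's
    \<Rightarrow> ('c \<times> (nat \<Rightarrow> ('a \<times> 'c) option)) set" where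
  "complete_coloured_traces T C tau s = {ctrace C tau s f | f. is_maximal_path T s f}"

definition divergent_coloured_traces :: "('s \<times> 'a \<times> 's) set \<Rightarrow> ('s \<Rightarrow> 'c) \<Rightarrow> 'a \<Rightarrow> 's
    \<Rightarrow> ('c \<times> (nat \<Rightarrow> ('a \<times> 'c) option)) set" where
  "divergent_coloured_traces T C tau s =
     {ctrace C tau s f | f. is_path T s f \<and> \<not> finite_seq f \<and> finite_seq (snd (ctrace C tau s f))}"

definition consistent_colouring :: "('s \<times> 'a \<times> 's) set \<Rightarrow> ('s \<Rightarrow> 'c) \<Rightarrow> 'a \<Rightarrow> bool" where
  "consistent_colouring T C tau \<longleftrightarrow>
     (\<forall>t u. C t = C u \<longrightarrow> coloured_traces T C tau t = coloured_traces T C tau u)"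

definition proper_prefix :: "'c \<times> (nat \<Rightarrow> 'b option) \<Rightarrow> 'c \<times> (nat \<Rightarrow> 'b option) \<Rightarrow> bool" where
  "proper_prefix \<sigma> \<rho> \<longleftrightarrow> fst \<sigma> = fst \<rho> \<and> (\<forall>n. snd \<sigma> n \<noteq> None \<longrightarrow> snd \<sigma> n = snd \<rho> n) \<and> \<sigma> \<noteq> \<rho>"

end

theory Submission
  imports Defs
begin


lemma cnt_finite: "finite {m. m < (n::nat) \<and> P m}"
  by (rule finite_subset[of _ "{..<n}"]) auto

lemma cnt_less:
  fixes P :: "nat \<Rightarrow> bool"
  assumes "P n1" "n1 < n2"
  shows "card {m. m<n1 \<and> P m} < card {m. m<n2 \<and> P m}"
proof -
  have "{m. m<n1 \<and> P m} \<subset> {m. m<n2 \<and> P m}" using assms by auto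
  then show ?thesis by (rule psubset_card_mono[OF cnt_finite])
qed

lemma cnt_inj:
  fixes P :: "nat \<Rightarrow> bool"
  assumes "P n1" "P n2" "card {m. m<n1 \<and> P m} = card {m. m<n2 \<and> P m}"
  shows "n1 = n2"
  using cnt_less[of P n1 n2] cnt_less[of P n2 n1] assms by (metis nat_neq_iff less_irrefl)

lemma cnt_lt_card:
  fixes P :: "nat \<Rightarrow> bool"
  assumes "finite {n. P n}" "P n"
  shows "card {m. m<n \<and> P m} < card {n. P n}"
proof -
  have "{m. m<n \<and> P m} \<subset> {n. P n}" using assms by auto
  then show ?thesis by (rule psubset_card_mono[OF assms(1)])
qed

lemma cnt_exists:
  fixes P :: "nat \<Rightarrow> bool" shows
  "infinite {n. P n} \<or> k < card {n. P n} \<Longrightarrow> \<exists>n. P n \<and> card {m. m<n \<and> P m} = k"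
proof (induction k)
  case 0
  then have "{n. P n} \<noteq> {}" by (metis card.empty finite.emptyI less_irrefl)
  then obtain x where "P x" by auto
  define n where "n = (LEAST n. P n)"
  have "P n" unfolding n_def using \<open>P x\<close> by (rule LeastI)
  moreover have "{m. m<n \<and> P m} = {}" unfolding n_def using not_less_Least by auto
  ultimately show ?case by auto
next
  case (Suc k)
  then have "infinite {n. P n} \<or> k < card {n. P n}" by auto
  with Suc.IH obtain n where n: "P n" "card {m. m<n \<and> P m} = k" by auto
  have "\<exists>n'. P n' \<and> n < n'"
  proof (rule ccontr)
    assume "\<not> ?thesis"
    then have sub: "{n. P n} \<subseteq> insert n {m. m<n \<and> P m}" by (auto simp: not_less nat_neq_iff)
    then have fin: "finite {n. P n}" using cnt_finite by (metis finite_insert finite_subset)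
    have "card {n. P n} \<le> card (insert n {m. m<n \<and> P m})"
      using sub by (rule card_mono[rotated]) (simp add: cnt_finite)
    also have "\<dots> \<le> Suc k" using n card_insert_le_m1 by (simp add: card_insert_if cnt_finite)
    finally show False using Suc.prems fin by auto
  qed
  then obtain x where x: "P x" "n < x" by auto
  define n' where "n' = (LEAST n'. P n' \<and> n < n')"
  have n': "P n' \<and> n < n'" unfolding n'_def by (rule LeastI_ex) (use x in auto)
  have "{m. m<n' \<and> P m} = insert n {m. m<n \<and> P m}"
  proof
    show "{m. m<n' \<and> P m} \<subseteq> insert n {m. m<n \<and> P m}"
    proof
      fix m assume m: "m \<in> {m. m<n' \<and> P m}"
      have "\<not> (P m \<and> n < m)" using m not_less_Least[of m "\<lambda>n'. P n' \<and> n < n'"] unfolding n'_def by auto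
      then show "m \<in> insert n {m. m<n \<and> P m}" using m by auto
    qed
  next
    show "insert n {m. m<n \<and> P m} \<subseteq> {m. m<n' \<and> P m}" using n n' by auto
  qed
  then have "card {m. m<n' \<and> P m} = Suc k" using n by (simp add: cnt_finite)
  then show ?case using n' by auto
qed

lemma kept_Some: "kept C tau s f n \<Longrightarrow> f n \<noteq> None"
  unfolding kept_def by auto

lemma ctrace_fst[simp]: "fst (ctrace C tau s f) = C s"
  by (simp add: ctrace_def)

lemma ctrace_snd_at:
  assumes "kept C tau s f n"
  shows "snd (ctrace C tau s f) (card {m. m<n \<and> kept C tau s f m}) = map_option (\<lambda>(a,t). (a, C t)) (f n)"
proof -
  have the_eq: "(THE n'. kept C tau s f n' \<and> card {m. m<n' \<and> kept C tau s f m} = card {m. m<n \<and> kept C tau s f m}) = n"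
  proof (rule the_equality)
    show "kept C tau s f n \<and> card {m. m<n \<and> kept C tau s f m} = card {m. m<n \<and> kept C tau s f m}"
      using assms by blast
    show "n' = n" if "kept C tau s f n' \<and> card {m. m<n' \<and> kept C tau s f m} = card {m. m<n \<and> kept C tau s f m}" for n'
      using cnt_inj[of "kept C tau s f" n' n] that assms by blast
  qed
  have ex: "\<exists>n'. kept C tau s f n' \<and> card {m. m<n' \<and> kept C tau s f m} = card {m. m<n \<and> kept C tau s f m}"
    using assms by blast
  show ?thesis by (simp only: ctrace_def snd_conv if_P[OF ex] the_eq)
qed

lemma ctrace_snd_None:
  assumes "\<not>(\<exists>n. kept C tau s f n \<and> card {m. m<n \<and> kept C tau s f m} = k)"
  shows "snd (ctrace C tau s f) k = None"
  by (simp only: ctrace_def snd_conv if_not_P[OF assms])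

lemma ctrace_snd_ex:
  assumes "snd (ctrace C tau s f) k \<noteq> None"
  shows "\<exists>n. kept C tau s f n \<and> card {m. m<n \<and> kept C tau s f m} = k"
proof (rule ccontr)
  assume "\<not> ?thesis"
  from ctrace_snd_None[OF this] show False using assms by simp
qed

lemma ctrace_eqI:
  assumes "\<And>m. kept C tau s f m = kept C tau s g m" "\<And>m. kept C tau s f m \<Longrightarrow> f m = g m"
  shows "ctrace C tau s f = ctrace C tau s g"
proof -
  have "snd (ctrace C tau s f) k = snd (ctrace C tau s g) k" for k
  proof (cases "\<exists>n. kept C tau s f n \<and> card {m. m<n \<and> kept C tau s f m} = k")
    case True
    then obtain n where n: "kept C tau s f n" "card {m. m<n \<and> kept C tau s f m} = k" by blast
    have g: "kept C tau s g n" "card {m. m<n \<and> kept C tau s g m} = k" using n assms(1) by auto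
    have "snd (ctrace C tau s f) k = map_option (\<lambda>(a,t). (a, C t)) (f n)"
      using ctrace_snd_at[OF n(1)] n(2) by simp
    moreover have "snd (ctrace C tau s g) k = map_option (\<lambda>(a,t). (a, C t)) (g n)"
      using ctrace_snd_at[OF g(1)] g(2) by simp
    ultimately show ?thesis using assms(2)[OF n(1)] by simp
  next
    case False
    then have F2: "\<not>(\<exists>n. kept C tau s g n \<and> card {m. m<n \<and> kept C tau s g m} = k)" using assms(1) by auto
    show ?thesis using ctrace_snd_None[OF False] ctrace_snd_None[OF F2] by simp
  qed
  then have "snd (ctrace C tau s f) = snd (ctrace C tau s g)" by (rule ext)
  then show ?thesis by (intro prod_eqI) simp_all
qed

lemma wf_none_after: assumes "wf_seq f" "f N = None" "N \<le> m" shows "f m = None"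
  using assms(3) by (induction m rule: dec_induct) (use assms in \<open>auto simp: wf_seq_def\<close>)

lemma state_at_cong: "(\<And>m. m < M \<Longrightarrow> f m = g m) \<Longrightarrow> state_at s f M = state_at s g M"
  by (cases M) auto




lemma cnt_Suc: "card {m. m < Suc M \<and> P m} = (if P M then Suc (card {m. m < M \<and> P m}) else card {m. m < M \<and> P m})"
proof -
  have "{m. m < Suc M \<and> P m} = (if P M then insert M {m. m < M \<and> P m} else {m. m < M \<and> P m})"
    by (auto simp: less_Suc_eq)
  then show ?thesis by (simp add: cnt_finite)
qed

lemma colour_lemma:
  assumes "\<forall>m<M. h m \<noteq> None"
  shows "C (state_at s h M) = (if card {m. m<M \<and> kept C tau s h m} = 0 then C s
           else snd (the (snd (ctrace C tau s h) (card {m. m<M \<and> kept C tau s h m} - 1))))"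
  using assms
proof (induction M)
  case 0
  then show ?case by simp
next
  case (Suc M)
  then obtain a t where at: "h M = Some (a, t)" by auto
  have IH: "C (state_at s h M) = (if card {m. m<M \<and> kept C tau s h m} = 0 then C s
           else snd (the (snd (ctrace C tau s h) (card {m. m<M \<and> kept C tau s h m} - 1))))"
    using Suc by auto
  show ?case
  proof (cases "kept C tau s h M")
    case True
    show ?thesis using ctrace_snd_at[OF True] at by (simp add: cnt_Suc True)
  next
    case False
    then have Ct: "C t = C (state_at s h M)" using at unfolding kept_def by auto
    have e1: "state_at s h (Suc M) = t" using at by simp
    have ceq: "card {m. m<Suc M \<and> kept C tau s h m} = card {m. m<M \<and> kept C tau s h m}"
      using cnt_Suc[of M "kept C tau s h"] False by simp
    show ?thesis unfolding e1 ceq Ct IH by (rule refl)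
  qed
qed

lemma ext_path:
  assumes "is_path T s f" "f N = None" "\<forall>m<N. f m \<noteq> None" "(state_at s f N, a, t) \<in> T"
  shows "is_path T s (f(N := Some (a,t)))"
proof -
  let ?g = "f(N := Some (a,t))"
  have st: "state_at s ?g m = state_at s f m" if "m \<le> N" for m
    by (rule state_at_cong) (use that in auto)
  have wf: "wf_seq f" using assms(1) unfolding is_path_def by auto
  have "wf_seq ?g" unfolding wf_seq_def
  proof (intro allI impI)
    fix m assume "?g m = None"
    then have "m \<noteq> N" "f m = None" by (auto split: if_splits)
    then have "N < m" using assms(3) by (metis linorder_neqE_nat)
    then show "?g (Suc m) = None" using wf_none_after[OF wf assms(2), of "Suc m"] by auto
  qed
  moreover have "(state_at s ?g m, a', t') \<in> T" if "?g m = Some (a', t')" for m a' t'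
  proof (cases "m = N")
    case True then show ?thesis using that st[of N] assms(4) by auto
  next
    case False
    then have fm: "f m = Some (a', t')" using that by auto
    then have "m < N" using wf_none_after[OF wf assms(2), of m] by (metis not_le option.distinct(1))
    then show ?thesis using st[of m] fm assms(1) unfolding is_path_def by auto
  qed
  ultimately show ?thesis unfolding is_path_def by auto
qed

lemma ext_prefix:
  assumes "is_path T s f" "f N = None" "\<forall>m<N. f m \<noteq> None"
    and nk: "\<not> (a = tau \<and> C t = C (state_at s f N))"
  shows "proper_prefix (ctrace C tau s f) (ctrace C tau s (f(N := Some (a,t))))"
proof -
  let ?g = "f(N := Some (a,t))"
  have wf: "wf_seq f" using assms(1) unfolding is_path_def by auto
  have fN: "f m = None" if "N \<le> m" for m using wf_none_after[OF wf assms(2) that] .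
  have st: "state_at s ?g m = state_at s f m" if "m \<le> N" for m
    by (rule state_at_cong) (use that in auto)
  have kf: "kept C tau s f m \<Longrightarrow> m < N" for m using kept_Some fN by (metis not_le)
  have keq: "kept C tau s ?g m = kept C tau s f m" if "m \<noteq> N" for m
  proof (cases "m < N")
    case True then show ?thesis using st[of m] that unfolding kept_def by auto
  next
    case False then show ?thesis using that fN[of m] unfolding kept_def by auto
  qed
  have kgN: "kept C tau s ?g N" using nk st[of N] unfolding kept_def by auto
  have ceq: "card {m. m<n \<and> kept C tau s ?g m} = card {m. m<n \<and> kept C tau s f m}" if "n \<le> N" for n
    using keq that by (metis (no_types, lifting) less_le_trans less_irrefl)
  have Kf: "{m. kept C tau s f m} = {m. m < N \<and> kept C tau s f m}" using kf by auto
  have finK: "finite {m. kept C tau s f m}" using Kf cnt_finite by metis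
  have pre: "snd (ctrace C tau s f) j = snd (ctrace C tau s ?g) j" if jn: "snd (ctrace C tau s f) j \<noteq> None" for j
  proof -
    obtain n where n: "kept C tau s f n" "card {m. m<n \<and> kept C tau s f m} = j"
      using ctrace_snd_ex[OF jn] by auto
    have "n < N" using kf n by auto
    then have "kept C tau s ?g n" "card {m. m<n \<and> kept C tau s ?g m} = j" using keq n ceq by auto
    then show ?thesis using ctrace_snd_at[OF n(1)] ctrace_snd_at[of C tau s ?g n] n \<open>n < N\<close> by auto
  qed
  have jN: "card {m. m<N \<and> kept C tau s f m} = card {m. kept C tau s f m}" using Kf by simp
  have "snd (ctrace C tau s ?g) (card {m. kept C tau s f m}) \<noteq> None"
    using ctrace_snd_at[OF kgN] ceq[of N] jN by simp
  moreover have "snd (ctrace C tau s f) (card {m. kept C tau s f m}) = None"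
    by (rule ctrace_snd_None) (use cnt_lt_card[OF finK] in fastforce)
  ultimately have "ctrace C tau s f \<noteq> ctrace C tau s ?g" by metis
  then show ?thesis unfolding proper_prefix_def using pre by auto
qed

lemma suffix_state:
  "state_at (state_at s g q) (\<lambda>m. g (q+m)) m = state_at s g (q+m)"
  by (cases m) auto

lemma suffix_path:
  assumes "is_path T s g"
  shows "is_path T (state_at s g q) (\<lambda>m. g (q+m))"
  using assms unfolding is_path_def wf_seq_def by (auto simp: suffix_state)

lemma deadlock_traces:
  assumes "\<forall>a t. (u,a,t) \<notin> T" "\<rho> \<in> coloured_traces T C tau u"
  shows "snd \<rho> 0 = None"
proof -
  obtain h where h: "\<rho> = ctrace C tau u h" "is_path T u h" using assms(2) unfolding coloured_traces_def by auto
  have "h 0 = None"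
  proof (rule ccontr)
    assume "h 0 \<noteq> None"
    then obtain a t where "h 0 = Some (a,t)" by auto
    then show False using h(2) assms(1) unfolding is_path_def by fastforce
  qed
  then have "h m = None" for m using wf_none_after[of h 0 m] h(2) unfolding is_path_def by auto
  then have "\<not> kept C tau u h n" for n unfolding kept_def by auto
  then show ?thesis using h(1) ctrace_snd_None by metis
qed




definition nxt :: "('s \<times> 'a \<times> 's) set \<Rightarrow> 's \<Rightarrow> ('a \<times> 's) option" where
  "nxt T v = (if \<exists>a t. (v,a,t) \<in> T then Some (SOME p. (v, fst p, snd p) \<in> T) else None)"

primrec walk :: "('s \<times> 'a \<times> 's) set \<Rightarrow> 's \<Rightarrow> nat \<Rightarrow> ('a \<times> 's) option" where
  "walk T u 0 = nxt T u"
| "walk T u (Suc m) = (case walk T u m of None \<Rightarrow> None | Some p \<Rightarrow> nxt T (snd p))"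

lemma nxt_Some: "nxt T v = Some (a,t) \<Longrightarrow> (v,a,t) \<in> T"
proof -
  assume as: "nxt T v = Some (a,t)"
  then have ex: "\<exists>a t. (v,a,t) \<in> T" unfolding nxt_def by (auto split: if_splits)
  then have "\<exists>p. (v, fst p, snd p) \<in> T" by auto
  then have "(v, fst (SOME p. (v, fst p, snd p) \<in> T), snd (SOME p. (v, fst p, snd p) \<in> T)) \<in> T"
    by (rule someI_ex)
  then show ?thesis using as ex unfolding nxt_def by auto
qed

lemma nxt_None: "nxt T v = None \<Longrightarrow> (v,a,t) \<notin> T"
  unfolding nxt_def by (auto split: if_splits)

lemma finite_path_maximal:
  assumes p: "is_path T s f" and fin: "finite_seq f"
    and H: "\<not> (\<exists>\<rho> \<in> coloured_traces T C tau s. proper_prefix (ctrace C tau s f) \<rho>)"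
  shows "\<exists>g. is_maximal_path T s g \<and> ctrace C tau s g = ctrace C tau s f"
proof -
  have wf: "wf_seq f" using p unfolding is_path_def by auto
  define n where "n = (LEAST n. f n = None)"
  have fn: "f n = None" unfolding n_def using fin unfolding finite_seq_def by (rule LeastI_ex)
  have fl: "\<forall>m<n. f m \<noteq> None" unfolding n_def using not_less_Least by blast
  define u where "u = state_at s f n"
  define g where "g = (\<lambda>m. if m < n then f m else walk T u (m - n))"
  have G1: "g m = f m" if "m < n" for m using that g_def by auto
  have G3: "g m = walk T u (m - n)" if "n \<le> m" for m using that g_def by auto
  have G2: "state_at s g m = state_at s f m" if "m \<le> n" for m
    by (rule state_at_cong) (use that G1 in auto)
  have Gn: "state_at s g n = u" using G2 u_def by auto
  have GS: "\<exists>p. g M = Some p \<and> state_at s g (Suc M) = snd p \<and> g (Suc M) = nxt T (snd p)"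
    if M1: "n \<le> M" and M2: "g M \<noteq> None" for M
  proof -
    obtain p where p: "g M = Some p" using M2 by (meson not_None_eq)
    have "walk T u (Suc M - n) = nxt T (snd p)" using p G3[OF M1] M1
      by (simp add: Suc_diff_le)
    then show ?thesis using p G3[of "Suc M"] M1 by auto
  qed
  have G4: "(state_at s g N, a, t) \<in> T" if NN: "n \<le> N" and gNS: "g N = Some (a,t)" for N a t
  proof (cases "N = n")
    case True then show ?thesis using gNS Gn G3[of n] nxt_Some by auto
  next
    case False
    obtain M where M: "N = Suc M" "n \<le> M" using NN False by (cases N) auto
    have "g M \<noteq> None"
    proof
      assume "g M = None"
      then have "walk T u (Suc M - n) = None" using G3[OF M(2)] M(2) by (simp add: Suc_diff_le)
      then show False using gNS NN M G3[of N] by auto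
    qed
    then obtain p where "g M = Some p" "state_at s g (Suc M) = snd p" "g (Suc M) = nxt T (snd p)"
      using GS[OF M(2)] by auto
    then show ?thesis using gNS M nxt_Some by auto
  qed
  have gwf: "wf_seq g" unfolding wf_seq_def
  proof (intro allI impI)
    fix m assume gm: "g m = None"
    then have "n \<le> m" using G1 fl by (metis not_le)
    then show "g (Suc m) = None" using gm G3[of m] G3[of "Suc m"] by (simp add: Suc_diff_le)
  qed
  have gpath: "is_path T s g"
  proof -
    have "(state_at s g m, a, t) \<in> T" if "g m = Some (a,t)" for m a t
    proof (cases "m < n")
      case True
      then show ?thesis using that G1 G2[of m] p unfolding is_path_def by auto
    next
      case False then show ?thesis using G4 that by auto
    qed
    then show ?thesis using gwf unfolding is_path_def by auto
  qed
  define tr where "tr N = (\<lambda>m. if m < N then g m else None)" for N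
  have tr_n: "tr n = f" unfolding tr_def using G1 wf_none_after[OF wf fn] by (auto simp: not_less)
  have inv: "(\<forall>m<n+j. g m \<noteq> None) \<longrightarrow> is_path T s (tr (n+j)) \<and> ctrace C tau s (tr (n+j)) = ctrace C tau s f
       \<and> (\<forall>m. n \<le> m \<and> m < n+j \<longrightarrow> \<not> kept C tau s g m)" for j
  proof (induction j)
    case 0
    then show ?case using tr_n p by auto
  next
    case (Suc j)
    show ?case
    proof
      assume all: "\<forall>m<n + Suc j. g m \<noteq> None"
      then have IH: "is_path T s (tr (n+j))" "ctrace C tau s (tr (n+j)) = ctrace C tau s f"
        "\<forall>m. n \<le> m \<and> m < n+j \<longrightarrow> \<not> kept C tau s g m" using Suc by auto
      obtain a t where at: "g (n+j) = Some (a,t)" using all by fastforce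
      have trN: "tr (n+j) (n+j) = None" unfolding tr_def by auto
      have trl: "\<forall>m<n+j. tr (n+j) m \<noteq> None" using all unfolding tr_def by auto
      have sttr: "state_at s (tr (n+j)) (n+j) = state_at s g (n+j)"
        by (rule state_at_cong) (auto simp: tr_def)
      have trS: "tr (n + Suc j) = (tr (n+j))(n+j := Some (a,t))"
        unfolding tr_def using at by (auto simp: less_Suc_eq)
      have tT: "(state_at s (tr (n+j)) (n+j), a, t) \<in> T" using G4[of "n+j"] at sttr by auto
      have pathS: "is_path T s (tr (n + Suc j))" unfolding trS by (rule ext_path[OF IH(1) trN trl tT])
      have silent: "a = tau \<and> C t = C (state_at s (tr (n+j)) (n+j))"
      proof (rule ccontr)
        assume nk: "\<not> ?thesis"
        have "proper_prefix (ctrace C tau s f) (ctrace C tau s (tr (n + Suc j)))"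
          using ext_prefix[OF IH(1) trN trl nk] IH(2) trS by simp
        moreover have "ctrace C tau s (tr (n + Suc j)) \<in> coloured_traces T C tau s"
          using pathS unfolding coloured_traces_def by auto
        ultimately show False using H by auto
      qed
      have nkg: "\<not> kept C tau s g (n+j)" using silent sttr at unfolding kept_def by auto
      have st2: "state_at s (tr (n + Suc j)) m = state_at s (tr (n+j)) m" if "m \<le> n+j" for m
        by (rule state_at_cong) (use that in \<open>auto simp: tr_def\<close>)
      have keq: "kept C tau s (tr (n + Suc j)) m = kept C tau s (tr (n+j)) m" for m
      proof (cases "m = n+j")
        case True
        then show ?thesis using silent st2[of m] trN unfolding kept_def trS by auto
      next
        case False
        show ?thesis
        proof (cases "m < n+j")
          case True then show ?thesis using st2[of m] False unfolding kept_def trS by auto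
        next
          case False2: False
          then have "tr (n + Suc j) m = None" "tr (n+j) m = None" using False unfolding tr_def by auto
          then show ?thesis unfolding kept_def by auto
        qed
      qed
      have "ctrace C tau s (tr (n + Suc j)) = ctrace C tau s (tr (n+j))"
      proof (rule ctrace_eqI)
        show "kept C tau s (tr (n + Suc j)) m = kept C tau s (tr (n+j)) m" for m by (rule keq)
        show "tr (n + Suc j) m = tr (n+j) m" if "kept C tau s (tr (n + Suc j)) m" for m
          using that keq[of m] kept_Some[of C tau s "tr (n+j)" m] trN unfolding trS by auto
      qed
      then show "is_path T s (tr (n + Suc j)) \<and> ctrace C tau s (tr (n + Suc j)) = ctrace C tau s f
       \<and> (\<forall>m. n \<le> m \<and> m < n + Suc j \<longrightarrow> \<not> kept C tau s g m)"
        using pathS IH(2,3) nkg by (auto simp: less_Suc_eq)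
    qed
  qed
  have nk: "\<not> kept C tau s g m" if "n \<le> m" for m
  proof (cases "g m = None")
    case True then show ?thesis unfolding kept_def by auto
  next
    case False
    have eq: "n + (Suc m - n) = Suc m" using that by simp
    have "\<forall>m'<n + (Suc m - n). g m' \<noteq> None"
    proof (intro allI impI)
      fix m' assume "m' < n + (Suc m - n)"
      then have "m' \<le> m" using eq by simp
      then show "g m' \<noteq> None" using False wf_none_after[OF gwf, of m' m] by (metis not_None_eq)
    qed
    then show ?thesis using inv[of "Suc m - n"] that by auto
  qed
  have keq: "kept C tau s g m = kept C tau s f m" for m
  proof (cases "m < n")
    case True then show ?thesis using G1 G2[of m] unfolding kept_def by auto
  next
    case False
    then show ?thesis using nk[of m] fn wf_none_after[OF wf fn, of m] unfolding kept_def by auto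
  qed
  have ctr: "ctrace C tau s g = ctrace C tau s f"
  proof (rule ctrace_eqI)
    show "kept C tau s g m = kept C tau s f m" for m by (rule keq)
    show "g m = f m" if km: "kept C tau s g m" for m
    proof -
      have "f m \<noteq> None" using km keq kept_Some by metis
      then have "m < n" using wf_none_after[OF wf fn, of m] by (meson not_le)
      then show ?thesis by (rule G1)
    qed
  qed
  have "is_maximal_path T s g"
  proof (cases "finite_seq g")
    case False then show ?thesis using gpath unfolding is_maximal_path_def by auto
  next
    case True
    define N where "N = (LEAST N. g N = None)"
    have gN: "g N = None" unfolding N_def using True unfolding finite_seq_def by (rule LeastI_ex)
    have gl: "\<forall>m<N. g m \<noteq> None" unfolding N_def using not_less_Least by blast
    have Nn: "n \<le> N" using gN G1 fl by (metis not_le)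
    have dead: "(state_at s g N, a, t) \<notin> T" for a t
    proof (cases "N = n")
      case True then show ?thesis using gN G3[of n] Gn nxt_None[of T u a t] by simp
    next
      case False
      obtain M where M: "N = Suc M" "n \<le> M" using Nn False by (cases N) auto
      then have "g M \<noteq> None" using gl by auto
      then obtain p where pp: "g M = Some p" "state_at s g (Suc M) = snd p" "g (Suc M) = nxt T (snd p)"
        using GS[OF M(2)] by auto
      then have "nxt T (snd p) = None" using gN M(1) by simp
      then show ?thesis using pp(2) M(1) nxt_None[of T "snd p" a t] by simp
    qed
    show ?thesis unfolding is_maximal_path_def using gpath gN gl dead by auto
  qed
  then show ?thesis using ctr by auto
qed




lemma infinite_maximal: "is_path T s f \<Longrightarrow> \<not> finite_seq f \<Longrightarrow> is_maximal_path T s f"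
  unfolding is_maximal_path_def by auto

lemma finite_path_finite_trace:
  assumes p: "is_path T s f" and fin: "finite_seq f"
  shows "finite_seq (snd (ctrace C tau s f))"
proof -
  have wf: "wf_seq f" using p unfolding is_path_def by auto
  obtain n where fn: "f n = None" using fin unfolding finite_seq_def by auto
  have "{m. kept C tau s f m} \<subseteq> {..<n}"
  proof
    fix m assume "m \<in> {m. kept C tau s f m}"
    then show "m \<in> {..<n}" using kept_Some[of C tau s f m] wf_none_after[OF wf fn, of m] by (cases "m < n") auto
  qed
  then have finK: "finite {m. kept C tau s f m}" using finite_subset by blast
  have "snd (ctrace C tau s f) (card {m. kept C tau s f m}) = None"
    by (rule ctrace_snd_None) (use cnt_lt_card[OF finK] in fastforce)
  then show ?thesis unfolding finite_seq_def by auto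
qed

lemma snd_some:
  assumes "kept C tau s f n"
  shows "snd (ctrace C tau s f) (card {m. m<n \<and> kept C tau s f m}) \<noteq> None"
proof -
  obtain a t where "f n = Some (a,t)" using kept_Some[OF assms] by (cases "f n") auto
  then show ?thesis using ctrace_snd_at[OF assms] by simp
qed

theorem lemma3p7:
  fixes T :: "('s \<times> 'a \<times> 's) set" and C :: "'s \<Rightarrow> 'c" and tau :: 'a and s :: 's
    and \<sigma> :: "'c \<times> (nat \<Rightarrow> ('a \<times> 'c) option)"
  assumes "consistent_colouring T C tau"
  shows "\<sigma> \<in> complete_coloured_traces T C tau s \<longleftrightarrow>
           (\<sigma> \<in> coloured_traces T C tau s \<and> \<not> finite_seq (snd \<sigma>))
         \<or> \<sigma> \<in> divergent_coloured_traces T C tau s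
         \<or> (\<sigma> \<in> coloured_traces T C tau s \<and>
              \<not> (\<exists>\<rho> \<in> coloured_traces T C tau s. proper_prefix \<sigma> \<rho>))"
proof
  assume "\<sigma> \<in> complete_coloured_traces T C tau s"
  then obtain f where f: "\<sigma> = ctrace C tau s f" "is_maximal_path T s f"
    unfolding complete_coloured_traces_def by auto
  have p: "is_path T s f" using f(2) unfolding is_maximal_path_def by auto
  have tr: "\<sigma> \<in> coloured_traces T C tau s" using f p unfolding coloured_traces_def by auto
  show "(\<sigma> \<in> coloured_traces T C tau s \<and> \<not> finite_seq (snd \<sigma>))
         \<or> \<sigma> \<in> divergent_coloured_traces T C tau s
         \<or> (\<sigma> \<in> coloured_traces T C tau s \<and>
              \<not> (\<exists>\<rho> \<in> coloured_traces T C tau s. proper_prefix \<sigma> \<rho>))"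
  proof (cases "finite_seq f")
    case False
    then show ?thesis using tr f p unfolding divergent_coloured_traces_def by auto
  next
    case True
    then obtain n where n: "f n = None" "\<forall>m<n. f m \<noteq> None" "\<forall>a t. (state_at s f n, a, t) \<notin> T"
      using f(2) unfolding is_maximal_path_def by auto
    define u where "u = state_at s f n"
    have wf: "wf_seq f" using p unfolding is_path_def by auto
    have kf: "kept C tau s f m \<Longrightarrow> m < n" for m using kept_Some[of C tau s f m] wf_none_after[OF wf n(1), of m] by (cases "m < n") auto
    have Kf: "{m. m < n \<and> kept C tau s f m} = {m. kept C tau s f m}" using kf by auto
    have finK: "finite {m. kept C tau s f m}" using Kf cnt_finite[of n "kept C tau s f"] by simp
    define k where "k = card {m. kept C tau s f m}"
    have noprefix: "\<not> (\<exists>\<rho> \<in> coloured_traces T C tau s. proper_prefix \<sigma> \<rho>)"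
    proof
      assume "\<exists>\<rho> \<in> coloured_traces T C tau s. proper_prefix \<sigma> \<rho>"
      then obtain g where g: "is_path T s g" "proper_prefix \<sigma> (ctrace C tau s g)"
        unfolding coloured_traces_def by auto
      let ?\<rho> = "ctrace C tau s g"
      have pre: "\<And>j. snd \<sigma> j \<noteq> None \<Longrightarrow> snd \<sigma> j = snd ?\<rho> j" "\<sigma> \<noteq> ?\<rho>"
        using g(2) unfolding proper_prefix_def by auto
      have "\<exists>j. snd \<sigma> j \<noteq> snd ?\<rho> j"
      proof (rule ccontr)
        assume "\<not> ?thesis"
        then have "snd \<sigma> = snd ?\<rho>" by auto
        then show False using pre(2) f(1) by (simp add: prod_eq_iff)
      qed
      then obtain j where j: "snd \<sigma> j \<noteq> snd ?\<rho> j" by auto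
      have sj: "snd \<sigma> j = None" using pre(1)[of j] j by (cases "snd \<sigma> j") auto
      then have "snd ?\<rho> j \<noteq> None" using j by auto
      then obtain nj where nj: "kept C tau s g nj" "card {m. m<nj \<and> kept C tau s g m} = j"
        using ctrace_snd_ex[of C tau s g j] by blast
      have kj: "k \<le> j"
      proof (rule ccontr)
        assume "\<not> k \<le> j"
        then obtain n' where n': "kept C tau s f n'" "card {m. m<n' \<and> kept C tau s f m} = j"
          using cnt_exists[of "kept C tau s f" j] k_def by auto
        have "snd \<sigma> j \<noteq> None" using snd_some[OF n'(1)] n'(2) f(1) by simp
        then show False using sj by auto
      qed
      have "infinite {m. kept C tau s g m} \<or> k < card {m. kept C tau s g m}"
        using cnt_lt_card[of "kept C tau s g" nj] nj kj by auto
      then obtain q where q: "kept C tau s g q" "card {m. m<q \<and> kept C tau s g m} = k"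
        using cnt_exists[of "kept C tau s g" k] by blast
      have gl: "\<forall>m<q. g m \<noteq> None"
      proof (intro allI impI)
        fix m assume "m < q"
        then show "g m \<noteq> None" using kept_Some[OF q(1)] wf_none_after[of g m q] g(1) unfolding is_path_def by (cases "g m") (auto simp: less_imp_le)
      qed
      have cg: "C (state_at s g q) = (if k = 0 then C s else snd (the (snd ?\<rho> (k - 1))))"
        using colour_lemma[OF gl, of C s tau] q(2) by simp
      have cf: "C u = (if k = 0 then C s else snd (the (snd \<sigma> (k - 1))))"
        using colour_lemma[OF n(2), of C s tau] Kf k_def f(1) u_def by simp
      have "k \<noteq> 0 \<Longrightarrow> snd \<sigma> (k-1) \<noteq> None"
      proof -
        assume "k \<noteq> 0"
        then obtain n' where n': "kept C tau s f n'" "card {m. m<n' \<and> kept C tau s f m} = k - 1"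
          using cnt_exists[of "kept C tau s f" "k-1"] k_def by auto
        show "snd \<sigma> (k-1) \<noteq> None" using snd_some[OF n'(1)] n'(2) f(1) by simp
      qed
      then have ceq: "C (state_at s g q) = C u"
      proof (cases "k = 0")
        case True then show ?thesis using cg cf by simp
      next
        case False
        assume h: "k \<noteq> 0 \<Longrightarrow> snd \<sigma> (k-1) \<noteq> None"
        have "snd \<sigma> (k-1) = snd ?\<rho> (k-1)" using pre(1)[OF h[OF False]] .
        then show ?thesis using cg cf False by simp
      qed
      then have traces_eq: "coloured_traces T C tau (state_at s g q) = coloured_traces T C tau u"
        by (rule mp[OF spec[OF spec[OF assms[unfolded consistent_colouring_def]]]])
      let ?h = "\<lambda>m. g (q+m)"
      have hp: "is_path T (state_at s g q) ?h" by (rule suffix_path[OF g(1)])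
      have hk: "kept C tau (state_at s g q) ?h 0" using q(1) unfolding kept_def by simp
      have "snd (ctrace C tau (state_at s g q) ?h) 0 \<noteq> None"
        using snd_some[OF hk] by simp
      moreover have "ctrace C tau (state_at s g q) ?h \<in> coloured_traces T C tau (state_at s g q)"
        using hp unfolding coloured_traces_def by blast
      then have "ctrace C tau (state_at s g q) ?h \<in> coloured_traces T C tau u"
        using traces_eq by simp
      then have "snd (ctrace C tau (state_at s g q) ?h) 0 = None"
        using deadlock_traces[of u T] n(3) u_def by simp
      ultimately show False by simp
    qed
    then show ?thesis using tr by auto
  qed
next
  assume H: "(\<sigma> \<in> coloured_traces T C tau s \<and> \<not> finite_seq (snd \<sigma>))
         \<or> \<sigma> \<in> divergent_coloured_traces T C tau s
         \<or> (\<sigma> \<in> coloured_traces T C tau s \<and>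
              \<not> (\<exists>\<rho> \<in> coloured_traces T C tau s. proper_prefix \<sigma> \<rho>))"
  show "\<sigma> \<in> complete_coloured_traces T C tau s"
  proof (rule disjE[OF H])
    assume inf: "\<sigma> \<in> coloured_traces T C tau s \<and> \<not> finite_seq (snd \<sigma>)"
    then obtain f where f: "\<sigma> = ctrace C tau s f" "is_path T s f" unfolding coloured_traces_def by auto
    then have "\<not> finite_seq f" using inf finite_path_finite_trace[OF f(2), of C tau] f(1) by auto
    then have "is_maximal_path T s f" using f(2) by (rule infinite_maximal[rotated])
    then show ?thesis using f(1) unfolding complete_coloured_traces_def by auto
  next
    assume H2: "\<sigma> \<in> divergent_coloured_traces T C tau s \<or> (\<sigma> \<in> coloured_traces T C tau s \<and>
              \<not> (\<exists>\<rho> \<in> coloured_traces T C tau s. proper_prefix \<sigma> \<rho>))"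
    show ?thesis
    proof (rule disjE[OF H2])
      assume "\<sigma> \<in> divergent_coloured_traces T C tau s"
      then obtain f where f: "\<sigma> = ctrace C tau s f" "is_path T s f" "\<not> finite_seq f"
        unfolding divergent_coloured_traces_def by auto
      have "is_maximal_path T s f" using infinite_maximal[OF f(2) f(3)] .
      then show ?thesis using f(1) unfolding complete_coloured_traces_def by auto
    next
      assume max: "\<sigma> \<in> coloured_traces T C tau s \<and>
              \<not> (\<exists>\<rho> \<in> coloured_traces T C tau s. proper_prefix \<sigma> \<rho>)"
      then obtain f where f: "\<sigma> = ctrace C tau s f" "is_path T s f" unfolding coloured_traces_def by auto
      show ?thesis
      proof (cases "finite_seq f")
        case False
        have "is_maximal_path T s f" using infinite_maximal[OF f(2) False] .
        then show ?thesis using f(1) unfolding complete_coloured_traces_def by auto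
      next
        case True
        have nop: "\<not> (\<exists>\<rho> \<in> coloured_traces T C tau s. proper_prefix (ctrace C tau s f) \<rho>)"
          using max f(1) by simp
        obtain g where gg: "is_maximal_path T s g" "ctrace C tau s g = ctrace C tau s f"
          using finite_path_maximal[OF f(2) True nop] by blast
        have "\<sigma> = ctrace C tau s g" using gg(2) f(1) by simp
        then show ?thesis using gg(1) unfolding complete_coloured_traces_def by blast
      qed
    qed
  qed
qed


end
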